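(* Let $\Omega\subset\mathbb{R}^3$ be the open octahedron with vertices $\pm e_1,\pm e_2,\pm e_3$ ($e_m$ the unit vectors), and let $\mathcal{T}$ be its partition into the eight congruent tetrahedra each of which is the convex hull of one 2-face of $\Omega$ and the origin. Define the piecewise constant function $\bar q_h(x)=\operatorname{sgn}(x_1)\operatorname{sgn}(x_2)\operatorname{sgn}(x_3)$ for $x=(x_1,x_2,x_3)\in\Omega$. Then $\bar q_h\in\mathcal{L}^0_0(\mathcal{T})\cap L^2_0(\Omega)$ and \[\langle\operatorname{div}v_h,\bar q_h\rangle=0\qquad\text{for all } v_h\in\mathcal{L}^1_2(\mathcal{T};\mathbb{R}^3)\cap W^{1,1}_0(\Omega;\mathbb{R}^3).\]
   Context: $\mathcal{L}^s_k(\mathcal{T})$ denotes the space of functions in $W^{s,1}(\Omega)$ that are piecewise polynomials of degree at most $k$ on $\mathcal{T}$ (so $\mathcal{L}^0_0(\mathcal{T})$ are piecewise constants and $\mathcal{L}^1_2(\mathcal{T};\mathbb{R}^3)$ are continuous piecewise quadratic vector fields). $L^2_0(\Omega)$ is the space of $L^2$ functions with zero mean, and $\langle\cdot,\cdot\rangle$ the $L^2(\Omega)$ inner product. *)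

theory Defs
  imports "HOL-Analysis.Analysis"
begin

definition e :: "3 \<Rightarrow> real^3" where
  "e i = axis i 1"

definition octahedron :: "(real^3) set" where
  "octahedron = interior (convex hull {v. \<exists>i. v = e i \<or> v = - e i})"

text \<open>Sign vectors, indexing the eight 2-faces / tetrahedra.\<close>
definition sign_vectors :: "(real^3) set" where
  "sign_vectors = {s. \<forall>i. s $ i = 1 \<or> s $ i = -1}"

definition tetra :: "real^3 \<Rightarrow> (real^3) set" where
  "tetra s = convex hull {0, s $ 1 *\<^sub>R e 1, s $ 2 *\<^sub>R e 2, s $ 3 *\<^sub>R e 3}"

definition quad_poly :: "(real^3 \<Rightarrow> real) \<Rightarrow> bool" where
  "quad_poly p \<longleftrightarrow> (\<exists>c (b::real^3) (A::real^3^3). \<forall>x. p x = c + b \<bullet> x + x \<bullet> (A *v x))"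

definition L12 :: "(real^3 \<Rightarrow> real^3) \<Rightarrow> bool" where
  "L12 v \<longleftrightarrow> continuous_on (closure octahedron) v \<and>
     (\<forall>s\<in>sign_vectors. \<exists>P. (\<forall>i. quad_poly (\<lambda>x. P x $ i)) \<and> (\<forall>x\<in>tetra s. v x = P x))"

text \<open>Zero boundary trace (W^{1,1}_0 for continuous piecewise polynomials).\<close>
definition zero_trace :: "(real^3 \<Rightarrow> real^3) \<Rightarrow> bool" where
  "zero_trace v \<longleftrightarrow> (\<forall>x\<in>frontier octahedron. v x = 0)"

text \<open>Pointwise divergence (defined almost everywhere for piecewise polynomials).\<close>
definition div_at :: "(real^3 \<Rightarrow> real^3) \<Rightarrow> real^3 \<Rightarrow> real" where
  "div_at v x = (\<Sum>i\<in>UNIV. frechet_derivative v (at x) (axis i 1) $ i)"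

text \<open>L^0_0(T): piecewise constant (a.e., i.e. constant on the interior of each tetrahedron).\<close>
definition L00 :: "(real^3 \<Rightarrow> real) \<Rightarrow> bool" where
  "L00 q \<longleftrightarrow> (\<forall>s\<in>sign_vectors. \<exists>c. \<forall>x\<in>interior (tetra s). q x = c)"

definition L2_0 :: "(real^3 \<Rightarrow> real) \<Rightarrow> bool" where
  "L2_0 q \<longleftrightarrow> q \<in> borel_measurable (lebesgue_on octahedron) \<and>
     set_integrable lebesgue octahedron (\<lambda>x. (q x)\<^sup>2) \<and>
     set_integrable lebesgue octahedron q \<and>
     (LINT x:octahedron|lebesgue. q x) = 0"

definition qbar :: "real^3 \<Rightarrow> real" where
  "qbar x = sgn (x $ 1) * sgn (x $ 2) * sgn (x $ 3)"

end

theory Submission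
  imports Defs
begin

definition U :: "real^3 \<Rightarrow> (real^3) set" where
  "U s = {x. (\<forall>i. 0 < s$i * x$i) \<and> s$1*x$1 + s$2*x$2 + s$3*x$3 < 1}"
definition Tc :: "real^3 \<Rightarrow> (real^3) set" where
  "Tc s = {x. (\<forall>i. 0 \<le> s$i * x$i) \<and> s$1*x$1 + s$2*x$2 + s$3*x$3 \<le> 1}"
definition Cr :: "(real^3) set" where "Cr = {x. \<bar>x$1\<bar> + \<bar>x$2\<bar> + \<bar>x$3\<bar> \<le> 1}"
definition Oc :: "(real^3) set" where "Oc = {x. \<bar>x$1\<bar> + \<bar>x$2\<bar> + \<bar>x$3\<bar> < 1}"
abbreviation "HV \<equiv> convex hull {v. \<exists>i. v = e i \<or> v = - e i}"

lemma sv_sq: "s \<in> sign_vectors \<Longrightarrow> s$i * s$i = 1"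
  unfolding sign_vectors_def by (cases "s$i = 1") auto

lemma e_comp: "e i $ j = (if j = i then 1 else 0)"
  unfolding e_def axis_def by simp

lemma Tc_sub: assumes s: "s \<in> sign_vectors" shows "Tc s \<subseteq> tetra s"
proof
  fix x assume x: "x \<in> Tc s"
  define y :: "nat \<Rightarrow> real^3" where "y = (\<lambda>k. if k = 1 then s$1 *\<^sub>R e 1 else if k = 2 then s$2 *\<^sub>R e 2 else if k = 3 then s$3 *\<^sub>R e 3 else 0)"
  define u :: "nat \<Rightarrow> real" where "u = (\<lambda>k. if k = 1 then s$1*x$1 else if k = 2 then s$2*x$2 else if k = 3 then s$3*x$3 else 1 - (s$1*x$1 + s$2*x$2 + s$3*x$3))"
  have "(\<Sum>k\<in>{0,1,2,3}. u k *\<^sub>R y k) \<in> tetra s"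
    unfolding tetra_def
  proof (rule convex_sum)
    show "sum u {0,1,2,3} = 1" by (simp add: u_def)
    show "0 \<le> u k" if "k \<in> {0,1,2,3}" for k using x that by (auto simp: u_def Tc_def)
    show "y k \<in> convex hull {0, s $ 1 *\<^sub>R e 1, s $ 2 *\<^sub>R e 2, s $ 3 *\<^sub>R e 3}" if "k \<in> {0,1,2,3}" for k
      using that by (auto simp: y_def intro!: hull_inc)
  qed auto
  moreover have "(\<Sum>k\<in>{0,1,2,3}. u k *\<^sub>R y k) = x"
    using sv_sq[OF s, of 1] sv_sq[OF s, of 2] sv_sq[OF s, of 3]
    by (simp add: vec_eq_iff forall_3 u_def y_def e_comp)
  ultimately show "x \<in> tetra s" by simp
qed


lemma sv_cases: "s \<in> sign_vectors \<Longrightarrow> s$i = 1 \<or> s$i = -1"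
  unfolding sign_vectors_def by auto

lemma zero_HV: "0 \<in> HV"
proof -
  have "(1/2::real) *\<^sub>R e 1 + (1/2::real) *\<^sub>R (- e 1) \<in> HV"
    by (rule convexD[OF convex_convex_hull]) (auto intro!: hull_inc)
  then show ?thesis by simp
qed

lemma tetra_sub_HV: assumes s: "s \<in> sign_vectors" shows "tetra s \<subseteq> HV"
  unfolding tetra_def
proof (rule hull_minimal)
  show "convex HV" by (rule convex_convex_hull)
  have "s$i *\<^sub>R e i \<in> HV" for i
    using sv_cases[OF s, of i] by (auto intro!: hull_inc)
  then show "{0, s $ 1 *\<^sub>R e 1, s $ 2 *\<^sub>R e 2, s $ 3 *\<^sub>R e 3} \<subseteq> HV"
    using zero_HV by auto
qed

lemma convex_Cr: "convex Cr"
  unfolding convex_def Cr_def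
proof (clarsimp)
  fix x y :: "real^3" and u v :: real
  assume x: "\<bar>x $ 1\<bar> + \<bar>x $ 2\<bar> + \<bar>x $ 3\<bar> \<le> 1" and y: "\<bar>y $ 1\<bar> + \<bar>y $ 2\<bar> + \<bar>y $ 3\<bar> \<le> 1"
    and u: "0 \<le> u" and v: "0 \<le> v" and uv: "u + v = 1"
  have h: "\<bar>u * x$i + v * y$i\<bar> \<le> u * \<bar>x$i\<bar> + v * \<bar>y$i\<bar>" for i
    using u v by (metis abs_mult abs_of_nonneg abs_triangle_ineq)
  have "u * (\<bar>x $ 1\<bar> + \<bar>x $ 2\<bar> + \<bar>x $ 3\<bar>) + v * (\<bar>y $ 1\<bar> + \<bar>y $ 2\<bar> + \<bar>y $ 3\<bar>) \<le> u + v"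
    using x y u v by (meson add_mono mult_left_le)
  then show "\<bar>u * x $ 1 + v * y $ 1\<bar> + \<bar>u * x $ 2 + v * y $ 2\<bar> + \<bar>u * x $ 3 + v * y $ 3\<bar> \<le> 1"
    using h[of 1] h[of 2] h[of 3] uv by (simp add: algebra_simps)
qed

lemma HV_sub_Cr: "HV \<subseteq> Cr"
proof (rule hull_minimal)
  show "convex Cr" by (rule convex_Cr)
  show "{v. \<exists>i. v = e i \<or> v = - e i} \<subseteq> Cr"
  proof -
    have "e i \<in> Cr \<and> - e i \<in> Cr" for i
      using exhaust_3[of i] by (auto simp: Cr_def e_comp)
    then show ?thesis by blast
  qed
qed

lemma Cr_sub_HV: "Cr \<subseteq> HV"
proof
  fix x assume x: "x \<in> Cr"
  define s :: "real^3" where "s = (\<chi> i. if 0 \<le> x$i then 1 else -1)"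
  have s: "s \<in> sign_vectors" by (simp add: s_def sign_vectors_def)
  have "s$i * x$i = \<bar>x$i\<bar>" for i by (simp add: s_def)
  then have "x \<in> Tc s" using x by (simp add: Tc_def Cr_def)
  then show "x \<in> HV" using Tc_sub[OF s] tetra_sub_HV[OF s] by blast
qed

lemma HV_eq: "HV = Cr" using HV_sub_Cr Cr_sub_HV by blast

lemma open_Oc: "open Oc"
  unfolding Oc_def by (intro open_Collect_less continuous_intros)

lemma closed_Cr: "closed Cr"
  unfolding Cr_def by (intro closed_Collect_le continuous_intros)

lemma oct_eq: "octahedron = Oc"
proof
  show "Oc \<subseteq> octahedron"
    unfolding octahedron_def HV_eq
  proof (rule interior_maximal)
    show "Oc \<subseteq> Cr" unfolding Oc_def Cr_def by auto
  qed (rule open_Oc)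
next
  show "octahedron \<subseteq> Oc"
  proof
    fix x assume "x \<in> octahedron"
    then obtain r where r: "r > 0" "ball x r \<subseteq> Cr"
      unfolding octahedron_def HV_eq by (meson mem_interior)
    show "x \<in> Oc"
    proof (rule ccontr)
      assume "x \<notin> Oc"
      then have ge: "\<bar>x$1\<bar> + \<bar>x$2\<bar> + \<bar>x$3\<bar> \<ge> 1" by (simp add: Oc_def)
      define t where "t = r / (2 * (norm x + 1))"
      have "0 < 2 * (norm x + 1)" by (smt (verit) norm_ge_zero)
      then have t: "t > 0" using r unfolding t_def by simp
      have "dist x ((1 + t) *\<^sub>R x) = norm (x - (1 + t) *\<^sub>R x)" by (simp add: dist_norm)
      also have "x - (1 + t) *\<^sub>R x = (-t) *\<^sub>R x" by (simp add: scaleR_add_left)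
      also have "norm ((-t) *\<^sub>R x) = t * norm x" using t by simp
      also have "\<dots> < r"
      proof -
        have "t * norm x \<le> t * (norm x + 1)" using t by (intro mult_left_mono) auto
        also have "\<dots> = r / 2" unfolding t_def using \<open>0 < 2 * (norm x + 1)\<close> by (simp add: field_simps)
        finally show ?thesis using r by linarith
      qed
      finally have "(1 + t) *\<^sub>R x \<in> Cr" using r(2) by (metis mem_ball subsetD)
      then have "\<bar>(1+t) * x$1\<bar> + \<bar>(1+t) * x$2\<bar> + \<bar>(1+t) * x$3\<bar> \<le> 1"
        by (simp add: Cr_def)
      moreover have "\<bar>(1+t) * x$i\<bar> = (1+t) * \<bar>x$i\<bar>" for i
        using t by (simp add: abs_mult)
      ultimately have "(1+t) * (\<bar>x$1\<bar> + \<bar>x$2\<bar> + \<bar>x$3\<bar>) \<le> 1"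
        by (simp add: distrib_left)
      moreover have "(1+t) * (\<bar>x$1\<bar> + \<bar>x$2\<bar> + \<bar>x$3\<bar>) \<ge> 1 + t"
        using mult_left_mono[OF ge, of "1+t"] t by simp
      ultimately show False using t by linarith
    qed
  qed
qed

lemma frontier_oct: assumes "\<bar>x$1\<bar> + \<bar>x$2\<bar> + \<bar>x$3\<bar> = 1" shows "x \<in> frontier octahedron"
proof -
  have "0 \<in> octahedron" by (simp add: oct_eq Oc_def)
  then have "closure octahedron = closure HV"
    unfolding octahedron_def using convex_closure_interior[OF convex_convex_hull] by auto
  also have "\<dots> = Cr" using HV_eq closed_Cr by simp
  finally have "x \<in> closure octahedron" using assms by (simp add: Cr_def)
  moreover have "interior octahedron = Oc" using oct_eq open_Oc interior_open by metis
  then have "x \<notin> interior octahedron"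
    using assms by (simp add: Oc_def)
  ultimately show ?thesis by (simp add: frontier_def)
qed

lemma tetra_sub_Tc: assumes s: "s \<in> sign_vectors" shows "tetra s \<subseteq> Tc s"
  unfolding tetra_def
proof (rule hull_minimal)
  show "convex (Tc s)"
    unfolding convex_def Tc_def
  proof (clarsimp)
    fix x y :: "real^3" and u v :: real
    assume x: "\<forall>i. 0 \<le> s $ i * x $ i" "s $ 1 * x $ 1 + s $ 2 * x $ 2 + s $ 3 * x $ 3 \<le> 1"
      and y: "\<forall>i. 0 \<le> s $ i * y $ i" "s $ 1 * y $ 1 + s $ 2 * y $ 2 + s $ 3 * y $ 3 \<le> 1"
      and u: "0 \<le> u" and v: "0 \<le> v" and uv: "u + v = 1"
    have "\<forall>i. 0 \<le> s $ i * (u * x $ i + v * y $ i)"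
      using x(1) y(1) u v by (simp add: distrib_left mult.left_commute)
    moreover have "s $ 1 * (u * x $ 1 + v * y $ 1) + s $ 2 * (u * x $ 2 + v * y $ 2) + s $ 3 * (u * x $ 3 + v * y $ 3)
       = u * (s $ 1 * x $ 1 + s $ 2 * x $ 2 + s $ 3 * x $ 3) + v * (s $ 1 * y $ 1 + s $ 2 * y $ 2 + s $ 3 * y $ 3)"
      by (simp add: algebra_simps)
    moreover have "u * (s $ 1 * x $ 1 + s $ 2 * x $ 2 + s $ 3 * x $ 3) + v * (s $ 1 * y $ 1 + s $ 2 * y $ 2 + s $ 3 * y $ 3) \<le> u + v"
      using x(2) y(2) u v by (meson add_mono mult_left_le)
    ultimately show "(\<forall>i. 0 \<le> s $ i * (u * x $ i + v * y $ i)) \<and>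
       s $ 1 * (u * x $ 1 + v * y $ 1) + s $ 2 * (u * x $ 2 + v * y $ 2) + s $ 3 * (u * x $ 3 + v * y $ 3) \<le> 1"
      using uv by simp
  qed
  show "{0, s $ 1 *\<^sub>R e 1, s $ 2 *\<^sub>R e 2, s $ 3 *\<^sub>R e 3} \<subseteq> Tc s"
    using sv_sq[OF s, of 1] sv_sq[OF s, of 2] sv_sq[OF s, of 3]
    by (auto simp: Tc_def e_comp forall_3)
qed

lemma open_U: "open (U s)"
proof -
  have "U s = {x. 0 < s$1 * x$1} \<inter> {x. 0 < s$2 * x$2} \<inter> {x. 0 < s$3 * x$3} \<inter> {x. s$1*x$1 + s$2*x$2 + s$3*x$3 < 1}"
    by (auto simp: U_def forall_3)
  moreover have "open \<dots>"
    by (intro open_Int open_Collect_less continuous_intros)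
  ultimately show ?thesis by simp
qed

lemma U_sub_int: assumes s: "s \<in> sign_vectors" shows "U s \<subseteq> interior (tetra s)"
proof (rule interior_maximal[OF _ open_U])
  have "U s \<subseteq> Tc s" by (auto simp: U_def Tc_def less_imp_le)
  then show "U s \<subseteq> tetra s" using Tc_sub[OF s] by blast
qed

lemma int_tetra: assumes s: "s \<in> sign_vectors" and x: "x \<in> interior (tetra s)" shows "0 < s$i * x$i"
proof -
  have "tetra s \<subseteq> {x. (s$i *\<^sub>R axis i 1) \<bullet> x \<ge> 0}"
    using tetra_sub_Tc[OF s] by (auto simp: Tc_def inner_axis')
  then have "interior (tetra s) \<subseteq> interior {x. (s$i *\<^sub>R axis i 1) \<bullet> x \<ge> 0}"
    by (rule interior_mono)
  also have "\<dots> = {x. (s$i *\<^sub>R axis i 1) \<bullet> x > 0}"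
    using sv_cases[OF s, of i] by (intro interior_halfspace_ge) (auto simp: axis_eq_0_iff)
  finally show ?thesis using x by (auto simp: inner_axis')
qed

lemma open_lebesgue: "open (S::(real^3) set) \<Longrightarrow> S \<in> sets lebesgue"
  by (metis borel_open sets_completionI_sets sets_lborel)

lemma U_lebesgue: "U s \<in> sets lebesgue" by (rule open_lebesgue[OF open_U])

lemma U_bounded: assumes s: "s \<in> sign_vectors" shows "U s \<subseteq> cbox (-1) 1"
proof
  fix x assume x: "x \<in> U s"
  have pos: "0 < s$i * x$i" for i using x by (simp add: U_def)
  have "\<bar>x$i\<bar> = s$i * x$i" for i
    using sv_cases[OF s, of i] pos[of i] by auto
  moreover have "s$1 * x$1 + s$2 * x$2 + s$3 * x$3 < 1" using x by (simp add: U_def)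
  ultimately have "\<bar>x$i\<bar> \<le> 1" for i using pos[of 1] pos[of 2] pos[of 3] exhaust_3[of i] by auto
  then show "x \<in> cbox (-1) 1" by (simp add: mem_box_cart abs_le_iff)
qed

lemma abs_int_U:
  fixes g :: "real^3 \<Rightarrow> 'b::euclidean_space"
  assumes s: "s \<in> sign_vectors" and g: "continuous_on UNIV g"
  shows "g absolutely_integrable_on U s"
proof -
  have "g absolutely_integrable_on cbox (-1) 1"
    by (rule absolutely_integrable_continuous) (rule continuous_on_subset[OF g], simp)
  then show ?thesis
    by (rule set_integrable_subset[OF _ U_lebesgue U_bounded[OF s]])
qed

lemma cov:
  fixes f :: "real^3 \<Rightarrow> real^'n" and M :: "real^3^3"
  assumes d: "\<bar>det M\<bar> = 1" and S: "S \<in> sets lebesgue"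
    and f: "f absolutely_integrable_on ((\<lambda>x. M *v x + c) ` S)"
  shows "(\<lambda>x. f (M *v x + c)) absolutely_integrable_on S \<and>
         integral S (\<lambda>x. f (M *v x + c)) = integral ((\<lambda>x. M *v x + c) ` S) f"
proof -
  have inj: "inj_on (\<lambda>x. M *v x + c) S"
    using d inj_matrix_vector_mult[of M] invertible_det_nz[of M] by (auto simp: inj_on_def inj_def)
  have der: "((\<lambda>x. M *v x + c) has_derivative (\<lambda>h. M *v h)) (at x within S)" for x
  proof -
    have "((*v) M has_derivative (*v) M) (at x within S)"
      by (rule has_derivative_at_withinI, rule linear_imp_has_derivative, rule matrix_vector_mul_linear)
    then show ?thesis by (rule has_derivative_add_const)
  qed
  have "(\<lambda>x. \<bar>det (matrix (\<lambda>h. M *v h))\<bar> *\<^sub>R f (M *v x + c)) absolutely_integrable_on S \<and>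
        integral S (\<lambda>x. \<bar>det (matrix (\<lambda>h. M *v h))\<bar> *\<^sub>R f (M *v x + c)) = integral ((\<lambda>x. M *v x + c) ` S) f"
    using has_absolute_integral_change_of_variables[OF S der inj, of f "integral ((\<lambda>x. M *v x + c) ` S) f"] f
    by blast
  then show ?thesis using d by simp
qed

definition Vol :: real where "Vol = integral (U 1) (\<lambda>x. 1)"
definition mom :: "real^3" where "mom = integral (U 1) (\<lambda>x. x)"
definition Dm :: "real^3 \<Rightarrow> real^3^3" where "Dm s = (\<chi> i j. if i = j then s$i else 0)"
definition P12 :: "real^3^3" where "P12 = vector [vector[0,1,0], vector[1,0,0], vector[0,0,1]]"
definition P13 :: "real^3^3" where "P13 = vector [vector[0,0,1], vector[0,1,0], vector[1,0,0]]"
definition Fm :: "real^3^3" where "Fm = vector [vector[-1,-1,-1], vector[0,1,0], vector[0,0,1]]"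

lemma img_inv: "(\<And>x. x \<in> A \<Longrightarrow> g x \<in> B) \<Longrightarrow> (\<And>y. y \<in> B \<Longrightarrow> h y \<in> A \<and> g (h y) = y) \<Longrightarrow> g ` A = B"
  by (auto simp: image_iff) (metis)

lemma Dm_app: "(Dm s *v x) $ i = s$i * x$i"
proof -
  have "(Dm s *v x) $ i = (\<Sum>j\<in>UNIV. (if i = j then s$i * x$j else 0))"
    unfolding Dm_def matrix_vector_mult_def vec_lambda_beta by (rule sum.cong) auto
  also have "\<dots> = s$i * x$i" by simp
  finally show ?thesis .
qed

lemma det_Dm: assumes s: "s \<in> sign_vectors" shows "\<bar>det (Dm s)\<bar> = 1"
proof -
  have "\<bar>det (Dm s)\<bar> = (\<Prod>i\<in>UNIV. \<bar>s$i\<bar>)"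
    by (subst det_diagonal) (auto simp: Dm_def abs_prod)
  also have "\<dots> = 1"
  proof (rule prod.neutral)
    show "\<forall>i\<in>UNIV. \<bar>s$i\<bar> = 1"
    proof
      fix i :: 3
      show "\<bar>s$i\<bar> = 1" using sv_cases[OF s, of i] by (elim disjE) simp_all
    qed
  qed
  finally show ?thesis .
qed

lemma U_img: assumes s: "s \<in> sign_vectors" shows "(\<lambda>x. Dm s *v x + 0) ` U 1 = U s"
proof (rule img_inv[where h = "\<lambda>x. Dm s *v x"])
  have sq: "s$i * (s$i * y) = y" for i y using sv_sq[OF s, of i] by (simp add: mult.assoc[symmetric])
  show "Dm s *v x + 0 \<in> U s" if "x \<in> U 1" for x
    using that by (simp add: U_def Dm_app sq)
  show "Dm s *v y \<in> U 1 \<and> Dm s *v (Dm s *v y) + 0 = y" if "y \<in> U s" for y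
    using that by (simp add: U_def Dm_app sq vec_eq_iff)
qed


lemma one_sv: "(1::real^3) \<in> sign_vectors" by (simp add: sign_vectors_def)

lemma int_of_abs: fixes f :: "'a::euclidean_space \<Rightarrow> 'b::euclidean_space"
  shows "f absolutely_integrable_on S \<Longrightarrow> f integrable_on S"
  by (rule set_lebesgue_integral_eq_integral(1))

lemma int_const: assumes "(\<lambda>x. 1::real) integrable_on S"
  shows "integral S (\<lambda>x. c) = integral S (\<lambda>x. 1::real) *\<^sub>R c"
  using has_integral_scaleR_left[OF integrable_integral[OF assms], of c] by (simp add: integral_unique)

lemma mom_fix:
  assumes d: "\<bar>det M\<bar> = 1" and im: "(\<lambda>x. M *v x + c) ` U 1 = U 1"
  shows "M *v mom + Vol *\<^sub>R c = mom"
proof -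
  have ai: "(\<lambda>x. x) absolutely_integrable_on (\<lambda>x. M *v x + c) ` U 1"
    unfolding im by (rule abs_int_U[OF one_sv continuous_on_id])
  have "integral (U 1) (\<lambda>x. M *v x + c) = integral ((\<lambda>x. M *v x + c) ` U 1) (\<lambda>x. x)"
    using cov[OF d U_lebesgue ai] by simp
  then have 1: "integral (U 1) (\<lambda>x. M *v x + c) = mom" unfolding im mom_def .
  have i1: "(\<lambda>x. x) integrable_on U 1" by (rule int_of_abs[OF abs_int_U[OF one_sv continuous_on_id]])
  have i2: "(\<lambda>x. M *v x) integrable_on U 1"
    by (rule int_of_abs[OF abs_int_U[OF one_sv]]) (intro linear_continuous_on matrix_vector_mul_bounded_linear)
  have i3: "(\<lambda>x. c) integrable_on U 1" by (rule int_of_abs[OF abs_int_U[OF one_sv continuous_on_const]])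
  have i4: "(\<lambda>x. 1::real) integrable_on U 1" by (rule int_of_abs[OF abs_int_U[OF one_sv continuous_on_const]])
  have "integral (U 1) (\<lambda>x. M *v x + c) = integral (U 1) (\<lambda>x. M *v x) + integral (U 1) (\<lambda>x. c)"
    by (rule integral_add[OF i2 i3])
  also have "integral (U 1) (\<lambda>x. M *v x) = M *v mom"
    using integral_linear[OF i1 matrix_vector_mul_bounded_linear, of M] by (simp add: o_def mom_def)
  also have "integral (U 1) (\<lambda>x. c) = Vol *\<^sub>R c"
    unfolding Vol_def by (rule int_const[OF i4])
  finally show ?thesis using 1 by simp
qed

lemma P12_app: "P12 *v x = vector [x$2, x$1, x$3]"
  by (simp add: vec_eq_iff forall_3 P12_def matrix_vector_mult_def sum_3)
lemma P13_app: "P13 *v x = vector [x$3, x$2, x$1]"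
  by (simp add: vec_eq_iff forall_3 P13_def matrix_vector_mult_def sum_3)
lemma Fm_app: "Fm *v x = vector [- x$1 - x$2 - x$3, x$2, x$3]"
  by (simp add: vec_eq_iff forall_3 Fm_def matrix_vector_mult_def sum_3)
lemma det_P12: "\<bar>det P12\<bar> = 1" by (simp add: det_3 P12_def)
lemma det_P13: "\<bar>det P13\<bar> = 1" by (simp add: det_3 P13_def)
lemma det_Fm: "\<bar>det Fm\<bar> = 1" by (simp add: det_3 Fm_def)

lemma U1_iff: "x \<in> U 1 \<longleftrightarrow> 0 < x$1 \<and> 0 < x$2 \<and> 0 < x$3 \<and> x$1 + x$2 + x$3 < 1"
  by (simp add: U_def forall_3)

lemma P12_img: "(\<lambda>x. P12 *v x + 0) ` U 1 = U 1"
  by (rule img_inv[where h = "\<lambda>x. P12 *v x"]) (auto simp: P12_app U1_iff vec_eq_iff forall_3)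
lemma P13_img: "(\<lambda>x. P13 *v x + 0) ` U 1 = U 1"
  by (rule img_inv[where h = "\<lambda>x. P13 *v x"]) (auto simp: P13_app U1_iff vec_eq_iff forall_3)
lemma Fm_img: "(\<lambda>x. Fm *v x + vector[1,0,0]) ` U 1 = U 1"
proof (rule img_inv[where h = "\<lambda>x. Fm *v x + vector[1,0,0]"])
  have inv: "Fm *v (Fm *v y + vector[1,0,0]) + vector[1,0,0] = y" for y
    by (simp add: Fm_app vec_eq_iff forall_3)
  have mem: "Fm *v x + vector[1,0,0] \<in> U 1" if "x \<in> U 1" for x
  proof -
    have "0 < x$1" "0 < x$2" "0 < x$3" "x$1 + x$2 + x$3 < 1" using that by (simp_all add: U1_iff)
    then show ?thesis unfolding U1_iff by (simp add: Fm_app)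
  qed
  show "Fm *v x + vector [1, 0, 0] \<in> U 1" if "x \<in> U 1" for x using mem that .
  show "Fm *v y + vector [1, 0, 0] \<in> U 1 \<and> Fm *v (Fm *v y + vector [1, 0, 0]) + vector [1, 0, 0] = y"
    if "y \<in> U 1" for y by (rule conjI[OF mem[OF that] inv])
qed

lemma mom_eq: "mom = (Vol / 4) *\<^sub>R 1"
proof -
  have "(P12 *v mom + Vol *\<^sub>R 0)$1 = mom$1" by (subst mom_fix[OF det_P12 P12_img]) (rule refl)
  then have a: "mom$2 = mom$1" by (simp add: P12_app)
  have "(P13 *v mom + Vol *\<^sub>R 0)$1 = mom$1" by (subst mom_fix[OF det_P13 P13_img]) (rule refl)
  then have b: "mom$3 = mom$1" by (simp add: P13_app)
  have "(Fm *v mom + Vol *\<^sub>R vector[1,0,0])$1 = mom$1" by (subst mom_fix[OF det_Fm Fm_img]) (rule refl)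
  then have c: "- mom$1 - mom$2 - mom$3 + Vol = mom$1" by (simp add: Fm_app)
  have "mom$i = Vol / 4" for i using a b c exhaust_3[of i] by auto
  then show ?thesis by (simp add: vec_eq_iff)
qed

lemma Us_eq: "s \<in> sign_vectors \<Longrightarrow> U s = (\<lambda>x. Dm s *v x + 0) ` U 1"
  using U_img by simp

lemma mom_s: assumes s: "s \<in> sign_vectors" shows "integral (U s) (\<lambda>x. x) = (Vol / 4) *\<^sub>R s"
proof -
  have ai: "(\<lambda>x. x) absolutely_integrable_on (\<lambda>x. Dm s *v x + 0) ` U 1"
    unfolding U_img[OF s] by (rule abs_int_U[OF s continuous_on_id])
  have "integral (U 1) (\<lambda>x. Dm s *v x + 0) = integral ((\<lambda>x. Dm s *v x + 0) ` U 1) (\<lambda>x. x)"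
    using cov[OF det_Dm[OF s] U_lebesgue ai] by simp
  then have 1: "integral (U 1) (\<lambda>x. Dm s *v x) = integral (U s) (\<lambda>x. x)" unfolding U_img[OF s] by simp
  have i1: "(\<lambda>x. x) integrable_on U 1" by (rule int_of_abs[OF abs_int_U[OF one_sv continuous_on_id]])
  have "integral (U 1) (\<lambda>x. Dm s *v x) = Dm s *v mom"
    using integral_linear[OF i1 matrix_vector_mul_bounded_linear, of "Dm s"] by (simp add: o_def mom_def)
  also have "\<dots> = (Vol / 4) *\<^sub>R s" unfolding mom_eq by (simp add: vec_eq_iff Dm_app)
  finally show ?thesis using 1 by simp
qed

lemma vol_s: assumes s: "s \<in> sign_vectors" shows "integral (U s) (\<lambda>x. 1::real) = Vol"
proof -
  have ai: "(\<lambda>x. 1::real^3) absolutely_integrable_on (\<lambda>x. Dm s *v x + 0) ` U 1"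
    unfolding U_img[OF s] by (rule abs_int_U[OF s continuous_on_const])
  have "integral (U 1) (\<lambda>x. 1::real^3) = integral ((\<lambda>x. Dm s *v x + 0) ` U 1) (\<lambda>x. 1::real^3)"
    using cov[OF det_Dm[OF s] U_lebesgue ai] by simp
  then have 1: "integral (U 1) (\<lambda>x. 1::real^3) = integral (U s) (\<lambda>x. 1::real^3)" unfolding U_img[OF s] .
  have "integral (U 1) (\<lambda>x. 1::real^3) = Vol *\<^sub>R 1"
    unfolding Vol_def by (rule int_const[OF int_of_abs[OF abs_int_U[OF one_sv continuous_on_const]]])
  moreover have "integral (U s) (\<lambda>x. 1::real^3) = integral (U s) (\<lambda>x. 1::real) *\<^sub>R 1"
    by (rule int_const[OF int_of_abs[OF abs_int_U[OF s continuous_on_const]]])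
  ultimately have "(Vol *\<^sub>R (1::real^3))$1 = (integral (U s) (\<lambda>x. 1::real) *\<^sub>R (1::real^3))$1"
    using 1 by simp
  then show ?thesis by simp
qed

definition sv3 :: "(real \<times> real \<times> real) \<Rightarrow> real^3" where "sv3 = (\<lambda>(a,b,c). vector [a,b,c])"

lemma sv_enum: "sign_vectors = sv3 ` ({-1,1} \<times> {-1,1} \<times> {-1,1})"
proof
  show "sign_vectors \<subseteq> sv3 ` ({-1,1} \<times> {-1,1} \<times> {-1,1})"
  proof
    fix s assume s: "s \<in> sign_vectors"
    have "s = sv3 (s$1, s$2, s$3)" by (simp add: sv3_def vec_eq_iff forall_3)
    moreover have "(s$1, s$2, s$3) \<in> {-1,1} \<times> {-1,1} \<times> {-1,1}"
      using sv_cases[OF s, of 1] sv_cases[OF s, of 2] sv_cases[OF s, of 3] by auto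
    ultimately show "s \<in> sv3 ` ({-1,1} \<times> {-1,1} \<times> {-1,1})" by (rule image_eqI)
  qed
  show "sv3 ` ({-1,1} \<times> {-1,1} \<times> {-1,1}) \<subseteq> sign_vectors"
  proof clarify
    fix a b c :: real assume "a \<in> {-1,1}" "b \<in> {-1,1}" "c \<in> {-1,1}"
    then show "sv3 (a,b,c) \<in> sign_vectors"
      unfolding sign_vectors_def sv3_def by (auto simp: forall_3)
  qed
qed

lemma inj_sv3: "inj sv3"
  by (auto simp: inj_def sv3_def vec_eq_iff forall_3)

lemma finite_sv: "finite sign_vectors"
  unfolding sv_enum by simp

lemma sum_sv: "(\<Sum>s\<in>sign_vectors. g s) =
   (\<Sum>a\<in>{-1,1}. \<Sum>b\<in>{-1,1}. \<Sum>c\<in>{-1,1}. g (vector [a,b,c]))"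
proof -
  have "(\<Sum>s\<in>sign_vectors. g s) = (\<Sum>p\<in>{-1,1} \<times> {-1,1} \<times> {-1,1}. g (sv3 p))"
    unfolding sv_enum by (rule sum.reindex[OF inj_on_subset[OF inj_sv3 subset_UNIV], unfolded o_def])
  also have "\<dots> = (\<Sum>a\<in>{-1,1}. \<Sum>p\<in>{-1,1} \<times> {-1,1}. g (sv3 (a, p)))"
    by (simp only: sum.cartesian_product split_def prod.collapse)
  also have "\<dots> = (\<Sum>a\<in>{-1,1}. \<Sum>b\<in>{-1,1}. \<Sum>c\<in>{-1,1}. g (sv3 (a, b, c)))"
    by (rule sum.cong[OF refl]) (simp only: sum.cartesian_product split_def prod.collapse)
  finally show ?thesis by (simp add: sv3_def)
qed

lemma sgn_vec_sv: "(\<chi> i. sgn (x$i)) \<in> sign_vectors" if "\<forall>i. x$i \<noteq> 0"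
  using that by (auto simp: sign_vectors_def sgn_if)

lemma in_U_sgn: assumes "x \<in> Oc" "\<forall>i. x$i \<noteq> 0" shows "x \<in> U (\<chi> i. sgn (x$i))"
proof -
  have a: "sgn (x$i) * x$i = \<bar>x$i\<bar>" for i by (simp add: sgn_mult_self_eq abs_sgn)
  have "0 < \<bar>x$i\<bar>" for i using assms(2) by simp
  then show ?thesis using assms(1) unfolding U_def Oc_def by (simp add: a)
qed

lemma U_sgn_unique: assumes s: "s \<in> sign_vectors" and x: "x \<in> U s" shows "s = (\<chi> i. sgn (x$i))"
proof -
  have "s$i = sgn (x$i)" for i
  proof -
    have "0 < s$i * x$i" using x by (simp add: U_def)
    then show ?thesis using sv_cases[OF s, of i] by (auto simp: sgn_if zero_less_mult_iff)
  qed
  then show ?thesis by (simp add: vec_eq_iff)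
qed

lemma negl_axes: "negligible ({x::real^3. x$1 = 0} \<union> {x. x$2 = 0} \<union> {x. x$3 = 0})"
  by (intro negligible_Un negligible_standard_hyperplane_cart)

lemma piecewise:
  fixes f :: "real^3 \<Rightarrow> real" and h :: "real^3 \<Rightarrow> real^3 \<Rightarrow> real"
  assumes hc: "\<And>s. s \<in> sign_vectors \<Longrightarrow> continuous_on UNIV (h s)"
    and eq: "\<And>s x. s \<in> sign_vectors \<Longrightarrow> x \<in> U s \<Longrightarrow> f x = h s x"
  shows "f absolutely_integrable_on octahedron \<and> integral octahedron f = (\<Sum>s\<in>sign_vectors. integral (U s) (h s))"
proof -
  define F where "F = (\<lambda>x. \<Sum>s\<in>sign_vectors. (if x \<in> U s then h s x else 0))"
  have Ol: "Oc \<in> sets lebesgue" by (rule open_lebesgue[OF open_Oc])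
  have Us_sub: "U s \<subseteq> Oc" if s: "s \<in> sign_vectors" for s
  proof
    fix x assume x: "x \<in> U s"
    have "\<bar>x$i\<bar> = s$i * x$i" for i
    proof -
      have "0 < s$i * x$i" using x by (simp add: U_def)
      then show ?thesis using sv_cases[OF s, of i] by auto
    qed
    then show "x \<in> Oc" using x by (simp add: U_def Oc_def)
  qed
  have term_ai: "(\<lambda>x. if x \<in> U s then h s x else 0) absolutely_integrable_on Oc" if s: "s \<in> sign_vectors" for s
  proof -
    have "(\<lambda>x. if x \<in> U s then h s x else 0) absolutely_integrable_on UNIV"
      unfolding absolutely_integrable_restrict_UNIV by (rule abs_int_U[OF s hc[OF s]])
    then show ?thesis by (rule set_integrable_subset[OF _ Ol]) simp
  qed
  have Fai: "F absolutely_integrable_on Oc"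
    unfolding F_def by (rule absolutely_integrable_sum[OF finite_sv term_ai])
  have Fint: "integral Oc F = (\<Sum>s\<in>sign_vectors. integral (U s) (h s))"
  proof -
    have "integral Oc F = (\<Sum>s\<in>sign_vectors. integral Oc (\<lambda>x. if x \<in> U s then h s x else 0))"
      unfolding F_def by (rule integral_sum[OF finite_sv int_of_abs[OF term_ai]])
    also have "\<dots> = (\<Sum>s\<in>sign_vectors. integral (U s) (h s))"
    proof (rule sum.cong[OF refl])
      fix s assume s: "s \<in> sign_vectors"
      have "U s \<inter> Oc = U s" using Us_sub[OF s] by blast
      then show "integral Oc (\<lambda>x. if x \<in> U s then h s x else 0) = integral (U s) (h s)"
        by (simp add: integral_restrict_Int)
    qed
    finally show ?thesis .
  qed
  have FE: "f x = F x" if x: "x \<in> Oc - ({x::real^3. x$1 = 0} \<union> {x. x$2 = 0} \<union> {x. x$3 = 0})" for x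
  proof -
    have nz: "\<forall>i. x$i \<noteq> 0" using x by (auto simp: forall_3)
    define s0 where "s0 = (\<chi> i. sgn (x$i))"
    have s0: "s0 \<in> sign_vectors" unfolding s0_def by (rule sgn_vec_sv[OF nz])
    have xO: "x \<in> Oc" using x by blast
    have xU: "x \<in> U s0" unfolding s0_def by (rule in_U_sgn[OF xO nz])
    have "F x = (\<Sum>s\<in>sign_vectors. (if s = s0 then h s0 x else 0))"
      unfolding F_def
    proof (rule sum.cong[OF refl])
      fix s assume s: "s \<in> sign_vectors"
      show "(if x \<in> U s then h s x else 0) = (if s = s0 then h s0 x else 0)"
      proof (cases "s = s0")
        case True then show ?thesis using xU by simp
      next
        case False
        have "x \<notin> U s" using U_sgn_unique[OF s, of x] False unfolding s0_def[symmetric] by blast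
        then show ?thesis using False by simp
      qed
    qed
    also have "\<dots> = h s0 x" using s0 by (simp add: sum.delta[OF finite_sv])
    finally show ?thesis using eq[OF s0 xU] by simp
  qed
  have "f absolutely_integrable_on Oc"
    by (rule absolutely_integrable_spike[OF Fai negl_axes]) (rule FE)
  moreover have "integral Oc f = integral Oc F"
    by (rule integral_spike[OF negl_axes]) (simp add: FE)
  ultimately show ?thesis using Fint oct_eq by simp
qed

definition qp :: "real \<Rightarrow> real^3 \<Rightarrow> real^3^3 \<Rightarrow> real^3 \<Rightarrow> real" where
  "qp c b A y = c + b \<bullet> y + y \<bullet> (A *v y)"

lemma sv_pm: "s \<in> sign_vectors \<Longrightarrow> s = vector [s$1, s$2, s$3]"
  by (simp add: vec_eq_iff forall_3)

lemma tet_id1: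
  assumes s1: "s1 = 1 \<or> s1 = -1" and s2: "s2 = 1 \<or> s2 = -1" and s3: "s3 = 1 \<or> s3 = -1"
  shows "b$1 + (A$1 + column 1 A) \<bullet> ((1/4) *\<^sub>R vector[s1,s2,s3]) =
    s1 * (qp c b A ((s1/2) *\<^sub>R e 1 + (s2/2) *\<^sub>R e 2) + qp c b A ((s1/2) *\<^sub>R e 1 + (s3/2) *\<^sub>R e 3)
          - qp c b A ((s2/2) *\<^sub>R e 2) - qp c b A ((s3/2) *\<^sub>R e 3))"
  using s1 s2 s3
  by (elim disjE; simp add: qp_def inner_vec_def sum_3 matrix_vector_mult_def column_def e_comp algebra_simps; simp add: field_simps)


lemma tet_id2:
  assumes s1: "s1 = 1 \<or> s1 = -1" and s2: "s2 = 1 \<or> s2 = -1" and s3: "s3 = 1 \<or> s3 = -1"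
  shows "b$2 + (A$2 + column 2 A) \<bullet> ((1/4) *\<^sub>R vector[s1,s2,s3]) =
    s2 * (qp c b A ((s1/2) *\<^sub>R e 1 + (s2/2) *\<^sub>R e 2) + qp c b A ((s2/2) *\<^sub>R e 2 + (s3/2) *\<^sub>R e 3)
          - qp c b A ((s1/2) *\<^sub>R e 1) - qp c b A ((s3/2) *\<^sub>R e 3))"
  using s1 s2 s3
  by (elim disjE; simp add: qp_def inner_vec_def sum_3 matrix_vector_mult_def column_def e_comp algebra_simps; simp add: field_simps)

lemma tet_id3:
  assumes s1: "s1 = 1 \<or> s1 = -1" and s2: "s2 = 1 \<or> s2 = -1" and s3: "s3 = 1 \<or> s3 = -1"
  shows "b$3 + (A$3 + column 3 A) \<bullet> ((1/4) *\<^sub>R vector[s1,s2,s3]) =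
    s3 * (qp c b A ((s1/2) *\<^sub>R e 1 + (s3/2) *\<^sub>R e 3) + qp c b A ((s2/2) *\<^sub>R e 2 + (s3/2) *\<^sub>R e 3)
          - qp c b A ((s1/2) *\<^sub>R e 1) - qp c b A ((s2/2) *\<^sub>R e 2))"
  using s1 s2 s3
  by (elim disjE; simp add: qp_def inner_vec_def sum_3 matrix_vector_mult_def column_def e_comp algebra_simps; simp add: field_simps)

lemma qp_deriv: "((\<lambda>y. qp c b A y) has_derivative (\<lambda>h. b \<bullet> h + (y0 \<bullet> (A *v h) + h \<bullet> (A *v y0)))) (at y0)"
proof -
  have l1: "((\<lambda>y. A *v y) has_derivative (\<lambda>h. A *v h)) (at y0)"
    by (rule linear_imp_has_derivative[OF matrix_vector_mul_linear])
  have l2: "((\<lambda>y. y) has_derivative (\<lambda>h. h)) (at y0)" by (rule has_derivative_ident)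
  have q: "((\<lambda>y. y \<bullet> (A *v y)) has_derivative (\<lambda>h. y0 \<bullet> (A *v h) + h \<bullet> (A *v y0))) (at y0)"
    by (rule has_derivative_inner[OF l2 l1])
  have lb: "((\<lambda>y. b \<bullet> y) has_derivative (\<lambda>h. b \<bullet> h)) (at y0)"
    by (rule has_derivative_inner_right[OF l2])
  have "((\<lambda>y. c + b \<bullet> y + y \<bullet> (A *v y)) has_derivative (\<lambda>h. 0 + b \<bullet> h + (y0 \<bullet> (A *v h) + h \<bullet> (A *v y0)))) (at y0)"
    by (intro has_derivative_add has_derivative_const lb q)
  then show ?thesis unfolding qp_def by simp
qed

lemma sum_axis_nth: "(\<Sum>i\<in>UNIV. f i *\<^sub>R axis i (1::real))$j = (f j :: real)"
proof -
  have "(\<Sum>i\<in>UNIV. f i *\<^sub>R axis i (1::real))$j = (\<Sum>i\<in>UNIV. if j = i then f i else 0)"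
    unfolding sum_component by (rule sum.cong) (auto simp: axis_def)
  also have "\<dots> = f j" by simp
  finally show ?thesis .
qed

lemma pt1: assumes s: "s \<in> sign_vectors" shows "(s$j/2) *\<^sub>R e j \<in> tetra s"
proof -
  have "(s$j/2) *\<^sub>R e j \<in> Tc s"
    using sv_sq[OF s, of j] exhaust_3[of j] by (auto simp: Tc_def e_comp)
  then show ?thesis using Tc_sub[OF s] by blast
qed

lemma pt2: assumes s: "s \<in> sign_vectors" and ij: "i \<noteq> j"
  shows "(s$i/2) *\<^sub>R e i + (s$j/2) *\<^sub>R e j \<in> tetra s"
    and "(s$i/2) *\<^sub>R e i + (s$j/2) *\<^sub>R e j \<in> frontier octahedron"
proof -
  have "(s$i/2) *\<^sub>R e i + (s$j/2) *\<^sub>R e j \<in> Tc s"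
    using sv_sq[OF s, of i] sv_sq[OF s, of j] exhaust_3[of i] exhaust_3[of j] ij by (auto simp: Tc_def e_comp)
  then show "(s$i/2) *\<^sub>R e i + (s$j/2) *\<^sub>R e j \<in> tetra s" using Tc_sub[OF s] by blast
  have a: "\<bar>s$i\<bar> = 1" "\<bar>s$j\<bar> = 1" using sv_cases[OF s, of i] sv_cases[OF s, of j] by auto
  show "(s$i/2) *\<^sub>R e i + (s$j/2) *\<^sub>R e j \<in> frontier octahedron"
    by (rule frontier_oct) (use a exhaust_3[of i] exhaust_3[of j] ij in \<open>auto simp: e_comp\<close>)
qed

lemma aff_int: assumes s: "s \<in> sign_vectors"
  shows "integral (U s) (\<lambda>x. k * (a + \<beta> \<bullet> x)) = k * Vol * (a + \<beta> \<bullet> ((1/4) *\<^sub>R s))"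
proof -
  have i1: "(\<lambda>x. x) integrable_on U s" by (rule int_of_abs[OF abs_int_U[OF s continuous_on_id]])
  have i2: "(\<lambda>x. a) integrable_on U s" by (rule int_of_abs[OF abs_int_U[OF s continuous_on_const]])
  have i3: "(\<lambda>x. \<beta> \<bullet> x) integrable_on U s"
    by (rule int_of_abs[OF abs_int_U[OF s]]) (intro continuous_intros)
  have i4: "(\<lambda>x. 1::real) integrable_on U s" by (rule int_of_abs[OF abs_int_U[OF s continuous_on_const]])
  have "integral (U s) (\<lambda>x. k * (a + \<beta> \<bullet> x)) = k * integral (U s) (\<lambda>x. a + \<beta> \<bullet> x)"
    by (rule integral_mult_right)
  also have "integral (U s) (\<lambda>x. a + \<beta> \<bullet> x) = integral (U s) (\<lambda>x. a) + integral (U s) (\<lambda>x. \<beta> \<bullet> x)"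
    by (rule integral_add[OF i2 i3])
  also have "integral (U s) (\<lambda>x. a) = Vol * a"
    using int_const[OF i4, of a] vol_s[OF s] by simp
  also have "integral (U s) (\<lambda>x. \<beta> \<bullet> x) = \<beta> \<bullet> ((Vol/4) *\<^sub>R s)"
    using integral_linear[OF i1 bounded_linear_inner_right, of \<beta>] mom_s[OF s] by (simp add: o_def)
  finally show ?thesis by (simp add: algebra_simps)
qed

lemma final_sum: fixes w :: "3 \<Rightarrow> real \<Rightarrow> 3 \<Rightarrow> real"
  shows "(\<Sum>s\<in>sign_vectors. s$1 * s$2 * s$3 * V * -(s$1*(w 2 (s$2) 1 + w 3 (s$3) 1) + s$2*(w 1 (s$1) 2 + w 3 (s$3) 2) + s$3*(w 1 (s$1) 3 + w 2 (s$2) 3))) = 0"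
  unfolding sum_sv by (simp add: algebra_simps)

lemma qbar_U: assumes s: "s \<in> sign_vectors" and x: "x \<in> U s" shows "qbar x = s$1 * s$2 * s$3"
proof -
  have "s$i = sgn (x$i)" for i using U_sgn_unique[OF s x] by (simp add: vec_eq_iff)
  then show ?thesis by (simp add: qbar_def)
qed

lemma L00_qbar: "L00 qbar"
  unfolding L00_def
proof
  fix s assume s: "s \<in> sign_vectors"
  show "\<exists>c. \<forall>x\<in>interior (tetra s). qbar x = c"
  proof (intro exI ballI)
    fix x assume x: "x \<in> interior (tetra s)"
    have "s$i = sgn (x$i)" for i
      using int_tetra[OF s x, of i] sv_cases[OF s, of i] by (auto simp: sgn_if zero_less_mult_iff)
    then show "qbar x = s$1 * s$2 * s$3" by (simp add: qbar_def)
  qed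
qed

lemma oct_leb: "octahedron \<in> sets lebesgue"
  unfolding oct_eq by (rule open_lebesgue[OF open_Oc])

lemma L2_0_qbar: "L2_0 qbar"
proof -
  have p1: "qbar absolutely_integrable_on octahedron \<and>
      integral octahedron qbar = (\<Sum>s\<in>sign_vectors. integral (U s) (\<lambda>x. s$1 * s$2 * s$3))"
    by (rule piecewise) (auto intro: qbar_U)
  have p2: "(\<lambda>x. (qbar x)\<^sup>2) absolutely_integrable_on octahedron \<and>
      integral octahedron (\<lambda>x. (qbar x)\<^sup>2) = (\<Sum>s\<in>sign_vectors. integral (U s) (\<lambda>x. (s$1 * s$2 * s$3)\<^sup>2))"
    by (rule piecewise) (auto simp: qbar_U)
  have i: "integral (U s) (\<lambda>x. s$1 * s$2 * s$3) = s$1 * s$2 * s$3 * Vol" if s: "s \<in> sign_vectors" for s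
  proof -
    have "integral (U s) (\<lambda>x. s$1 * s$2 * s$3) = integral (U s) (\<lambda>x. 1::real) *\<^sub>R (s$1 * s$2 * s$3)"
      by (rule int_const[OF int_of_abs[OF abs_int_U[OF s continuous_on_const]]])
    then show ?thesis unfolding vol_s[OF s] by (metis real_scaleR_def mult.commute)
  qed
  have "(\<Sum>s\<in>sign_vectors. integral (U s) (\<lambda>x. s$1 * s$2 * s$3)) = (\<Sum>s\<in>sign_vectors. s$1 * s$2 * s$3 * Vol)"
    by (rule sum.cong[OF refl]) (rule i)
  also have "\<dots> = 0" unfolding sum_sv by simp
  finally have z: "integral octahedron qbar = 0" using p1 by simp
  show ?thesis unfolding L2_0_def
    using p1 p2 z absolutely_integrable_imp_borel_measurable[OF _ oct_leb, of qbar]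
      set_lebesgue_integral_eq_integral(2)[of octahedron qbar]
    by simp
qed

definition Gv :: "(real^3 \<Rightarrow> real^3) \<Rightarrow> real^3 \<Rightarrow> real" where
  "Gv v s = -(s$1*(v ((s$2/2) *\<^sub>R e 2) $ 1 + v ((s$3/2) *\<^sub>R e 3) $ 1)
            + s$2*(v ((s$1/2) *\<^sub>R e 1) $ 2 + v ((s$3/2) *\<^sub>R e 3) $ 2)
            + s$3*(v ((s$1/2) *\<^sub>R e 1) $ 3 + v ((s$2/2) *\<^sub>R e 2) $ 3))"

lemma main_part:
  assumes L: "L12 v" and Z: "zero_trace v"
  shows "(LINT x:octahedron|lebesgue. div_at v x * qbar x) = 0"
proof -
  have "\<forall>s\<in>sign_vectors. \<exists>P. (\<forall>i. quad_poly (\<lambda>x. P x $ i)) \<and> (\<forall>x\<in>tetra s. v x = P x)"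
    using L by (simp add: L12_def)
  from bchoice[OF this] obtain P where
    P: "\<forall>s\<in>sign_vectors. (\<forall>i. quad_poly (\<lambda>x. P s x $ i)) \<and> (\<forall>x\<in>tetra s. v x = P s x)" by blast
  have "\<forall>si\<in>sign_vectors \<times> UNIV. \<exists>t. \<forall>x. P (fst si) x $ (snd si) = qp (fst t) (fst (snd t)) (snd (snd t)) x"
  proof
    fix si :: "(real^3) \<times> 3" assume "si \<in> sign_vectors \<times> UNIV"
    then have "quad_poly (\<lambda>x. P (fst si) x $ (snd si))" using P by auto
    then obtain c b A where "\<forall>x. P (fst si) x $ (snd si) = c + b \<bullet> x + x \<bullet> (A *v x)"
      unfolding quad_poly_def by blast
    then show "\<exists>t. \<forall>x. P (fst si) x $ (snd si) = qp (fst t) (fst (snd t)) (snd (snd t)) x"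
      by (intro exI[of _ "(c, b, A)"]) (simp add: qp_def)
  qed
  from bchoice[OF this] obtain T where
    T: "\<forall>si\<in>sign_vectors \<times> UNIV. \<forall>x. P (fst si) x $ (snd si) = qp (fst (T si)) (fst (snd (T si))) (snd (snd (T si))) x"
    by blast
  define cc where "cc s i = fst (T (s, i))" for s i
  define bb where "bb s i = fst (snd (T (s, i)))" for s i
  define AA where "AA s i = snd (snd (T (s, i)))" for s i
  have vq: "v y $ i = qp (cc s i) (bb s i) (AA s i) y" if s: "s \<in> sign_vectors" and y: "y \<in> tetra s" for s y i
  proof -
    have "v y = P s y" using P s y by blast
    moreover have "P s y $ i = qp (cc s i) (bb s i) (AA s i) y"
      using T s unfolding cc_def bb_def AA_def by force
    ultimately show ?thesis by simp
  qed
  define \<alpha> where "\<alpha> s = (\<Sum>j\<in>UNIV. bb s j $ j)" for s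
  define \<beta> where "\<beta> s = (\<Sum>j\<in>UNIV. AA s j $ j + column j (AA s j))" for s
  have ab: "\<alpha> s + \<beta> s \<bullet> w = (\<Sum>j\<in>UNIV. bb s j $ j + (AA s j $ j + column j (AA s j)) \<bullet> w)" for s w
    unfolding \<alpha>_def \<beta>_def by (simp add: sum.distrib inner_sum_left inner_add_left)
  have div: "div_at v x = \<alpha> s + \<beta> s \<bullet> x" if s: "s \<in> sign_vectors" and x: "x \<in> U s" for s x
  proof -
    define Q where "Q = (\<lambda>y. \<Sum>i\<in>UNIV. qp (cc s i) (bb s i) (AA s i) y *\<^sub>R axis i (1::real))"
    define D where "D = (\<lambda>h. \<Sum>i\<in>UNIV. (bb s i \<bullet> h + (x \<bullet> (AA s i *v h) + h \<bullet> (AA s i *v x))) *\<^sub>R axis i (1::real))"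
    have QD: "(Q has_derivative D) (at x)"
      unfolding Q_def D_def by (intro has_derivative_sum has_derivative_scaleR_left qp_deriv)
    have QV: "Q y = v y" if "y \<in> interior (tetra s)" for y
    proof -
      have y: "y \<in> tetra s" using that interior_subset by blast
      show ?thesis unfolding Q_def vec_eq_iff sum_axis_nth using vq[OF s y] by simp
    qed
    have xi: "x \<in> interior (tetra s)" using U_sub_int[OF s] x by blast
    have "(v has_derivative D) (at x)"
      by (rule has_derivative_transform_within_open[OF QD open_interior xi QV])
    then have fd: "frechet_derivative v (at x) = D" by (rule frechet_derivative_at[symmetric])
    have "div_at v x = (\<Sum>j\<in>UNIV. D (axis j 1) $ j)" unfolding div_at_def fd ..
    also have "\<dots> = (\<Sum>j\<in>UNIV. bb s j $ j + (AA s j $ j + column j (AA s j)) \<bullet> x)"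
    proof (rule sum.cong[OF refl])
      fix j :: 3
      have "D (axis j 1) $ j = bb s j \<bullet> axis j 1 + (x \<bullet> (AA s j *v axis j 1) + axis j 1 \<bullet> (AA s j *v x))"
        unfolding D_def by (rule sum_axis_nth)
      also have "\<dots> = bb s j $ j + (AA s j $ j + column j (AA s j)) \<bullet> x"
        by (simp add: inner_axis matrix_vector_mult_basis inner_commute[of "axis j 1"] matrix_vector_mul_component inner_add_left inner_commute[of x])
      finally show "D (axis j 1) $ j = bb s j $ j + (AA s j $ j + column j (AA s j)) \<bullet> x" .
    qed
    also have "\<dots> = \<alpha> s + \<beta> s \<bullet> x" by (rule ab[symmetric])
    finally show ?thesis .
  qed
  have Gs: "\<alpha> s + \<beta> s \<bullet> ((1/4) *\<^sub>R s) = Gv v s" if s: "s \<in> sign_vectors" for s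
  proof -
    have c: "s$1 = 1 \<or> s$1 = -1" "s$2 = 1 \<or> s$2 = -1" "s$3 = 1 \<or> s$3 = -1" using sv_cases[OF s] by auto
    have sv: "vector [s$1, s$2, s$3] = s" using sv_pm[OF s] by simp
    note t1 = tet_id1[OF c, of "bb s 1" "AA s 1" "cc s 1", unfolded sv]
    note t2 = tet_id2[OF c, of "bb s 2" "AA s 2" "cc s 2", unfolded sv]
    note t3 = tet_id3[OF c, of "bb s 3" "AA s 3" "cc s 3", unfolded sv]
    have z: "v ((s$i/2) *\<^sub>R e i + (s$j/2) *\<^sub>R e j) = 0" if "i \<noteq> j" for i j
      using Z pt2(2)[OF s that] by (simp add: zero_trace_def)
    have q2: "qp (cc s k) (bb s k) (AA s k) ((s$i/2) *\<^sub>R e i + (s$j/2) *\<^sub>R e j) = 0" if "i \<noteq> j" for i j k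
      using vq[OF s pt2(1)[OF s that], of k] z[OF that] by simp
    have q1: "qp (cc s k) (bb s k) (AA s k) ((s$i/2) *\<^sub>R e i) = v ((s$i/2) *\<^sub>R e i) $ k" for i k
      using vq[OF s pt1[OF s], of i k] by simp
    have "\<alpha> s + \<beta> s \<bullet> ((1/4) *\<^sub>R s) = (\<Sum>j\<in>UNIV. bb s j $ j + (AA s j $ j + column j (AA s j)) \<bullet> ((1/4) *\<^sub>R s))"
      by (rule ab)
    also have "\<dots> = (bb s 1 $ 1 + (AA s 1 $ 1 + column 1 (AA s 1)) \<bullet> ((1/4) *\<^sub>R s))
                  + (bb s 2 $ 2 + (AA s 2 $ 2 + column 2 (AA s 2)) \<bullet> ((1/4) *\<^sub>R s))
                  + (bb s 3 $ 3 + (AA s 3 $ 3 + column 3 (AA s 3)) \<bullet> ((1/4) *\<^sub>R s))"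
      by (rule sum_3)
    also have "\<dots> = Gv v s"
      unfolding t1 t2 t3 q1 Gv_def
      by (simp add: q2 algebra_simps)
    finally show ?thesis .
  qed
  have pw: "(\<lambda>x. div_at v x * qbar x) absolutely_integrable_on octahedron \<and>
      integral octahedron (\<lambda>x. div_at v x * qbar x) =
      (\<Sum>s\<in>sign_vectors. integral (U s) (\<lambda>x. (s$1 * s$2 * s$3) * (\<alpha> s + \<beta> s \<bullet> x)))"
  proof (rule piecewise)
    show "continuous_on UNIV (\<lambda>x. (s$1 * s$2 * s$3) * (\<alpha> s + \<beta> s \<bullet> x))" for s
      by (intro continuous_intros)
    show "div_at v x * qbar x = (s$1 * s$2 * s$3) * (\<alpha> s + \<beta> s \<bullet> x)" if "s \<in> sign_vectors" "x \<in> U s" for s x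
      using div[OF that] qbar_U[OF that] by simp
  qed
  have "(\<Sum>s\<in>sign_vectors. integral (U s) (\<lambda>x. (s$1 * s$2 * s$3) * (\<alpha> s + \<beta> s \<bullet> x)))
      = (\<Sum>s\<in>sign_vectors. s$1 * s$2 * s$3 * Vol * Gv v s)"
  proof (rule sum.cong[OF refl])
    fix s assume s: "s \<in> sign_vectors"
    show "integral (U s) (\<lambda>x. (s$1 * s$2 * s$3) * (\<alpha> s + \<beta> s \<bullet> x)) = s$1 * s$2 * s$3 * Vol * Gv v s"
      by (simp only: aff_int[OF s] Gs[OF s])
  qed
  also have "\<dots> = 0"
    using final_sum[of Vol "\<lambda>k a j. v ((a/2) *\<^sub>R e k) $ j"] unfolding Gv_def by simp
  finally have "integral octahedron (\<lambda>x. div_at v x * qbar x) = 0" using pw by simp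
  then show ?thesis using pw set_lebesgue_integral_eq_integral(2) by metis
qed

theorem proposition3p2:
  shows "L00 qbar \<and> L2_0 qbar \<and>
    (\<forall>v. L12 v \<and> zero_trace v \<longrightarrow>
        (LINT x:octahedron|lebesgue. div_at v x * qbar x) = 0)"
  using L00_qbar L2_0_qbar main_part by blast

end
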